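(* Let $n$ be a fixed natural number, $G=(V,E)$ a graph on vertex set $\{1,\dots,n\}$ with graph state $|G\rangle$ and stabilizer operators $g_1,\dots,g_n$, let $T>0$, $\beta=1/(k_BT)$, and let $\rho_T$ be the $n$-qubit thermal graph state at temperature $T$. Let $\ell\in\{0,1\}^n$ be arbitrary, and suppose the observable $S_\ell$ is measured on each of $N$ independent copies of $\rho_T$, producing outcomes $o_1,\dots,o_N\in\{+1,-1\}$, with $F_{\rm est}=\frac1N\sum_{i=1}^N o_i$. Then, in the limit $N\to\infty$, with probability one, $$\left|\langle G|\rho_T|G\rangle-F_{\rm est}\right| = \frac{\left|(n-2\,{\rm wt}(\ell))e^{-2\beta}+O(e^{-4\beta})\right|}{(1+e^{-2\beta})^n},$$ where ${\rm wt}(\ell)=\sum_{i=1}^n\ell_i$ is the Hamming weight and $O(e^{-4\beta})$ denotes terms of order $e^{-4\beta}$ and higher in $e^{-2\beta}$.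
   Context: For a graph $G=(V,E)$ on $n$ vertices, the graph state is $|G\rangle=\left(\prod_{(i,j)\in E}CZ_{i,j}\right)|+\rangle^{\otimes n}$, where $|+\rangle=(|0\rangle+|1\rangle)/\sqrt2$ and $CZ_{i,j}$ is the controlled-$Z$ gate on qubits $i,j$. Its stabilizer operators are $g_i=X_i\prod_{j:(i,j)\in E}Z_j$ for $1\le i\le n$, where $X_i,Z_j$ are Pauli operators on the indicated qubits. For $\ell=\ell_1\cdots\ell_n\in\{0,1\}^n$ let $S_\ell=\prod_{i=1}^n g_i^{\ell_i}$. Measuring $S_\ell$ on a state $\rho$ means performing the two-outcome projective measurement onto its $\pm1$ eigenspaces. With $\mathcal H=-\sum_{i=1}^n g_i$, the thermal graph state at temperature $T>0$ is $\rho_T=e^{-\beta\mathcal H}/{\rm Tr}[e^{-\beta\mathcal H}]$ with $\beta=1/(k_BT)$, $k_B$ the Boltzmann constant. *)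

theory Defs
  imports "HOL-Probability.Probability" "HOL-Computational_Algebra.Polynomial"
    "Jordan_Normal_Form.Matrix"
begin

text \<open>n-qubit operators are complex 2^n x 2^n matrices (Jordan_Normal_Form).
  Qubits are indexed 0..n-1; computational basis state k < 2^n has qubit i in
  state |bit k i>.\<close>

definition trace_mat :: "complex mat \<Rightarrow> complex" where
  "trace_mat A = (\<Sum>i<dim_row A. A $$ (i,i))"

definition mat_exp :: "complex mat \<Rightarrow> complex mat" where
  "mat_exp A = Matrix.mat (dim_row A) (dim_col A)
     (\<lambda>(i,j). \<Sum>k. (A ^\<^sub>m k) $$ (i,j) / of_nat (fact k))"

definition mat_prod_list :: "nat \<Rightarrow> complex mat list \<Rightarrow> complex mat" where
  "mat_prod_list n As = foldr (*) As (1\<^sub>m (2^n))"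

definition mat_sum_list :: "nat \<Rightarrow> complex mat list \<Rightarrow> complex mat" where
  "mat_sum_list n As = foldr (+) As (0\<^sub>m (2^n) (2^n))"

definition pauli_X :: "complex mat" where
  "pauli_X = Matrix.mat 2 2 (\<lambda>(r,c). if r \<noteq> c then 1 else 0)"

definition pauli_Z :: "complex mat" where
  "pauli_Z = Matrix.mat 2 2 (\<lambda>(r,c). if r = c then (if r = 0 then 1 else -1) else 0)"

text \<open>Single-qubit operator U acting on qubit i of n qubits (identity elsewhere).\<close>
definition on_qubit :: "nat \<Rightarrow> nat \<Rightarrow> complex mat \<Rightarrow> complex mat" where
  "on_qubit n i U = Matrix.mat (2^n) (2^n)
     (\<lambda>(r,c). if (\<forall>j<n. j \<noteq> i \<longrightarrow> bit r j = bit c j)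
              then U $$ (of_bool (bit r i), of_bool (bit c i)) else 0)"

definition CZ :: "nat \<Rightarrow> nat \<Rightarrow> nat \<Rightarrow> complex mat" where
  "CZ n i j = Matrix.mat (2^n) (2^n)
     (\<lambda>(r,c). if r = c then (if bit r i \<and> bit r j then -1 else 1) else 0)"

definition plus_state :: "nat \<Rightarrow> complex vec" where
  "plus_state n = Matrix.vec (2^n) (\<lambda>_. complex_of_real (1 / sqrt (2^n)))"

text \<open>A simple graph on vertices 0..n-1; each edge {i,j} is stored once as (i,j), i<j.\<close>
definition simple_graph :: "nat \<Rightarrow> (nat \<times> nat) set \<Rightarrow> bool" where
  "simple_graph n E \<longleftrightarrow> E \<subseteq> {(i,j). i < j \<and> j < n}"

text \<open>The edges of E listed in lexicographic order (order is immaterial: the CZ gates commute).\<close>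
definition edge_list :: "nat \<Rightarrow> (nat \<times> nat) set \<Rightarrow> (nat \<times> nat) list" where
  "edge_list n E = filter (\<lambda>e. e \<in> E) (concat (map (\<lambda>i. map (\<lambda>j. (i,j)) [0..<n]) [0..<n]))"

definition graph_state :: "nat \<Rightarrow> (nat \<times> nat) set \<Rightarrow> complex vec" where
  "graph_state n E =
     mat_prod_list n (map (\<lambda>(i,j). CZ n i j) (edge_list n E)) *\<^sub>v plus_state n"

definition stabilizer :: "nat \<Rightarrow> (nat \<times> nat) set \<Rightarrow> nat \<Rightarrow> complex mat" where
  "stabilizer n E i = on_qubit n i pauli_X *
     mat_prod_list n (map (\<lambda>j. on_qubit n j pauli_Z)
                           (filter (\<lambda>j. (i,j) \<in> E \<or> (j,i) \<in> E) [0..<n]))"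

definition stab_S :: "nat \<Rightarrow> (nat \<times> nat) set \<Rightarrow> (nat \<Rightarrow> bool) \<Rightarrow> complex mat" where
  "stab_S n E l = mat_prod_list n
     (map (\<lambda>i. stabilizer n E i ^\<^sub>m (of_bool (l i))) [0..<n])"

definition graph_hamiltonian :: "nat \<Rightarrow> (nat \<times> nat) set \<Rightarrow> complex mat" where
  "graph_hamiltonian n E = (-1) \<cdot>\<^sub>m mat_sum_list n (map (stabilizer n E) [0..<n])"

definition thermal_state :: "nat \<Rightarrow> (nat \<times> nat) set \<Rightarrow> real \<Rightarrow> complex mat" where
  "thermal_state n E \<beta> =
     (let A = mat_exp (complex_of_real (- \<beta>) \<cdot>\<^sub>m graph_hamiltonian n E)
      in (1 / trace_mat A) \<cdot>\<^sub>m A)"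

definition graph_fidelity :: "nat \<Rightarrow> (nat \<times> nat) set \<Rightarrow> complex mat \<Rightarrow> complex" where
  "graph_fidelity n E \<rho> = (\<rho> *\<^sub>v graph_state n E) \<bullet>c graph_state n E"

text \<open>Born-rule probability of outcome +1 when measuring the involutive observable S
  (projector onto its +1 eigenspace is (I+S)/2) on the state rho.\<close>
definition prob_plus :: "nat \<Rightarrow> complex mat \<Rightarrow> complex mat \<Rightarrow> real" where
  "prob_plus n S \<rho> = Re (trace_mat (((1/2) \<cdot>\<^sub>m (1\<^sub>m (2^n) + S)) * \<rho>))"

definition hamming_wt :: "nat \<Rightarrow> (nat \<Rightarrow> bool) \<Rightarrow> nat" where
  "hamming_wt n l = card {i. i < n \<and> l i}"

end

theory Submission imports Defs begin

lemma sum_lessThan_double: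
  fixes g :: "nat \<Rightarrow> 'a::comm_monoid_add"
  shows "(\<Sum>a<2*m. g a) = (\<Sum>a<m. g (2*a)) + (\<Sum>a<m. g (2*a+1))"
proof (induction m)
  case 0 then show ?case by simp
next
  case (Suc m)
  have e: "2 * Suc m = Suc (Suc (2*m))" by simp
  show ?case unfolding e using Suc by (simp add: algebra_simps)
qed

lemma bits_sum_prod:
  fixes f :: "nat \<Rightarrow> bool \<Rightarrow> 'a::comm_semiring_1"
  shows "(\<Sum>a<(2::nat)^n. \<Prod>i<n. f i (bit a i)) = (\<Prod>i<n. f i False + f i True)"
proof (induction n arbitrary: f)
  case 0 then show ?case by simp
next
  case (Suc n)
  have "(\<Sum>a<(2::nat)^Suc n. \<Prod>i<Suc n. f i (bit a i))
     = (\<Sum>a<(2::nat)^n. \<Prod>i<Suc n. f i (bit (2*a) i)) + (\<Sum>a<(2::nat)^n. \<Prod>i<Suc n. f i (bit (2*a+1) i))"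
    by (simp add: sum_lessThan_double)
  also have "\<dots> = (\<Sum>a<(2::nat)^n. f 0 False * (\<Prod>i<n. f (Suc i) (bit a i))) + (\<Sum>a<(2::nat)^n. f 0 True * (\<Prod>i<n. f (Suc i) (bit a i)))"
    unfolding prod.lessThan_Suc_shift by (simp add: bit_Suc bit_0)
  also have "\<dots> = (f 0 False + f 0 True) * (\<Prod>i<n. f (Suc i) False + f (Suc i) True)"
    using Suc[of "\<lambda>i. f (Suc i)"] by (simp add: sum_distrib_left[symmetric] algebra_simps)
  also have "\<dots> = (\<Prod>i<Suc n. f i False + f i True)"
    unfolding prod.lessThan_Suc_shift by simp
  finally show ?case .
qed


lemma prod_list_upt: "prod_list (map f [0..<n]) = (\<Prod>i<n. f i)"
  by (induction n) (auto simp: lessThan_Suc mult.commute)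

lemma sum_list_upt: "sum_list (map f [0..<n]) = (\<Sum>i<n. f i)"
  by (induction n) (auto simp: lessThan_Suc add.commute)

lemma eq_bits_lt:
  fixes x y :: nat
  assumes "x < 2^n" "y < 2^n" "\<forall>j<n. bit x j = bit y j"
  shows "x = y"
proof -
  have "take_bit n x = take_bit n y"
    by (rule bit_eqI) (use assms(3) in \<open>auto simp: bit_take_bit_iff\<close>)
  then show ?thesis using assms(1,2) by (simp add: take_bit_nat_eq_self)
qed

lemma bit_lt: fixes x :: nat assumes "x < 2^n" "bit x j" shows "j < n"
proof -
  have "take_bit n x = x" using assms(1) by (simp add: take_bit_nat_eq_self)
  then have "bit (take_bit n x) j" using assms(2) by simp
  then show ?thesis by (simp add: bit_take_bit_iff)
qed

lemma flip_lt: fixes x :: nat assumes "x < 2^n" "i < n" shows "flip_bit i x < 2^n"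
proof -
  have "take_bit n (flip_bit i x) = flip_bit i x"
    by (rule bit_eqI) (use assms bit_lt in \<open>auto simp: bit_take_bit_iff bit_flip_bit_iff\<close>)
  then show ?thesis by (simp add: take_bit_nat_eq_self_iff)
qed

lemma smult_mat_vec: "A \<in> carrier_mat m k \<Longrightarrow> v \<in> carrier_vec k \<Longrightarrow> (c \<cdot>\<^sub>m A) *\<^sub>v v = c \<cdot>\<^sub>v (A *\<^sub>v v)"
  by (intro eq_vecI) (auto simp: scalar_prod_def sum_distrib_left mult.assoc)

lemma on_qubit_carrier[simp]: "on_qubit n i U \<in> carrier_mat (2^n) (2^n)"
  by (simp add: on_qubit_def)
lemma CZ_carrier[simp]: "CZ n i j \<in> carrier_mat (2^n) (2^n)"
  by (simp add: CZ_def)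

lemma mat_prod_list_carrier:
  "(\<forall>A\<in>set As. A \<in> carrier_mat (2^n) (2^n)) \<Longrightarrow> mat_prod_list n As \<in> carrier_mat (2^n) (2^n)"
  by (induction As) (auto simp: mat_prod_list_def)

lemma mat_sum_list_carrier:
  "(\<forall>A\<in>set As. A \<in> carrier_mat (2^n) (2^n)) \<Longrightarrow> mat_sum_list n As \<in> carrier_mat (2^n) (2^n)"
  by (induction As) (auto simp: mat_sum_list_def)

lemma mat_prod_list_Cons_vec:
  assumes "\<forall>B\<in>set (A#As). B \<in> carrier_mat (2^n) (2^n)" "w \<in> carrier_vec (2^n)"
  shows "mat_prod_list n (A#As) *\<^sub>v w = A *\<^sub>v (mat_prod_list n As *\<^sub>v w)"
proof -
  have "mat_prod_list n (A#As) = A * mat_prod_list n As" by (simp add: mat_prod_list_def)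
  moreover have "mat_prod_list n As \<in> carrier_mat (2^n) (2^n)" using assms by (intro mat_prod_list_carrier) auto
  ultimately show ?thesis using assms by (simp add: assoc_mult_mat_vec[of _ "2^n" "2^n"])
qed

lemma mat_prod_list_eigen:
  assumes "\<And>x. x \<in> set xs \<Longrightarrow> F x \<in> carrier_mat (2^n) (2^n)"
    and "\<And>x. x \<in> set xs \<Longrightarrow> F x *\<^sub>v v = c x \<cdot>\<^sub>v v" and v: "v \<in> carrier_vec (2^n)"
  shows "mat_prod_list n (map F xs) *\<^sub>v v = prod_list (map c xs) \<cdot>\<^sub>v v"
  using assms(1,2)
proof (induction xs)
  case Nil then show ?case using v by (simp add: mat_prod_list_def)
next
  case (Cons x xs)
  have "mat_prod_list n (map F (x#xs)) *\<^sub>v v = F x *\<^sub>v (mat_prod_list n (map F xs) *\<^sub>v v)"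
    using Cons.prems v by (simp add: mat_prod_list_Cons_vec del: mat_prod_list_def)
  also have "\<dots> = F x *\<^sub>v (prod_list (map c xs) \<cdot>\<^sub>v v)" using Cons by simp
  also have "\<dots> = prod_list (map c xs) \<cdot>\<^sub>v (F x *\<^sub>v v)"
    using Cons.prems v by (intro mult_mat_vec[of _ "2^n" "2^n"]) auto
  also have "\<dots> = prod_list (map c xs) \<cdot>\<^sub>v (c x \<cdot>\<^sub>v v)" using Cons.prems by simp
  also have "\<dots> = prod_list (map c (x#xs)) \<cdot>\<^sub>v v" by (simp add: smult_smult_assoc mult.commute)
  finally show ?case .
qed

lemma mat_sum_list_eigen:
  assumes "\<And>x. x \<in> set xs \<Longrightarrow> F x \<in> carrier_mat (2^n) (2^n)"
    and "\<And>x. x \<in> set xs \<Longrightarrow> F x *\<^sub>v v = c x \<cdot>\<^sub>v v" and v: "v \<in> carrier_vec (2^n)"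
  shows "mat_sum_list n (map F xs) *\<^sub>v v = sum_list (map c xs) \<cdot>\<^sub>v v"
  using assms(1,2)
proof (induction xs)
  case Nil then show ?case using v by (auto simp: mat_sum_list_def)
next
  case (Cons x xs)
  have C: "mat_sum_list n (map F xs) \<in> carrier_mat (2^n) (2^n)" using Cons.prems by (intro mat_sum_list_carrier) auto
  have "mat_sum_list n (map F (x#xs)) = F x + mat_sum_list n (map F xs)" by (simp add: mat_sum_list_def)
  then have "mat_sum_list n (map F (x#xs)) *\<^sub>v v = F x *\<^sub>v v + mat_sum_list n (map F xs) *\<^sub>v v"
    using C Cons.prems v by (simp add: add_mult_distrib_mat_vec[of _ "2^n" "2^n"])
  also have "\<dots> = c x \<cdot>\<^sub>v v + sum_list (map c xs) \<cdot>\<^sub>v v" using Cons by simp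
  also have "\<dots> = sum_list (map c (x#xs)) \<cdot>\<^sub>v v" by (simp add: add_smult_distrib_vec)
  finally show ?case .
qed

lemma mult_vec_single:
  assumes A: "A \<in> carrier_mat (2^n) (2^n)" and w: "w \<in> carrier_vec (2^n)" and x: "x < 2^n"
    and h: "h x < 2^n" and ent: "\<And>c. c < 2^n \<Longrightarrow> A $$ (x,c) = (if c = h x then m else 0)"
  shows "(A *\<^sub>v w) $ x = m * w $ h x"
proof -
  have "(A *\<^sub>v w) $ x = (\<Sum>c\<in>{0..<2^n}. A $$ (x,c) * w $ c)"
    using A w x by (simp add: scalar_prod_def row_def)
  also have "\<dots> = (\<Sum>c\<in>{0..<2^n}. if c = h x then m * w $ c else 0)"
    by (rule sum.cong) (auto simp: ent)
  also have "\<dots> = m * w $ h x" using h by (simp add: sum.delta')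
  finally show ?thesis .
qed


definition sg :: "bool \<Rightarrow> complex" where "sg b = (if b then -1 else 1)"
definition chi :: "nat \<Rightarrow> nat \<Rightarrow> nat \<Rightarrow> complex" where
  "chi n a x = (\<Prod>i<n. sg (bit a i \<and> bit x i))"
definition sigmaE :: "nat \<Rightarrow> (nat \<times> nat) set \<Rightarrow> nat \<Rightarrow> complex" where
  "sigmaE n E x = (\<Prod>p<n. \<Prod>q<n. sg ((p,q) \<in> E \<and> bit x p \<and> bit x q))"
definition cn :: "nat \<Rightarrow> complex" where "cn n = complex_of_real (1 / sqrt (2^n))"
definition gv :: "nat \<Rightarrow> (nat \<times> nat) set \<Rightarrow> nat \<Rightarrow> complex vec" where
  "gv n E a = vec (2^n) (\<lambda>x. cn n * chi n a x * sigmaE n E x)"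

lemma gv_carrier[simp]: "gv n E a \<in> carrier_vec (2^n)" by (simp add: gv_def)
lemma gv_index[simp]: "x < 2^n \<Longrightarrow> gv n E a $ x = cn n * chi n a x * sigmaE n E x"
  by (simp add: gv_def)

lemma sg_sq[simp]: "sg b * sg b = 1" by (simp add: sg_def)

lemma mat_prod_list_diag:
  assumes "\<And>y w. y \<in> set xs \<Longrightarrow> w \<in> carrier_vec (2^n) \<Longrightarrow> F y *\<^sub>v w = vec (2^n) (\<lambda>x. d y x * w $ x)"
    and "\<And>y. y \<in> set xs \<Longrightarrow> F y \<in> carrier_mat (2^n) (2^n)"
    and w: "w \<in> carrier_vec (2^n)"
  shows "mat_prod_list n (map F xs) *\<^sub>v w = vec (2^n) (\<lambda>x. prod_list (map (\<lambda>y. d y x) xs) * w $ x)"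
  using assms(1,2)
proof (induction xs)
  case Nil then show ?case using w by (auto simp: mat_prod_list_def)
next
  case (Cons y xs)
  have "mat_prod_list n (map F (y#xs)) *\<^sub>v w = F y *\<^sub>v (mat_prod_list n (map F xs) *\<^sub>v w)"
    using Cons.prems w by (simp add: mat_prod_list_Cons_vec del: mat_prod_list_def)
  also have "\<dots> = F y *\<^sub>v vec (2^n) (\<lambda>x. prod_list (map (\<lambda>y. d y x) xs) * w $ x)" using Cons by simp
  also have "\<dots> = vec (2^n) (\<lambda>x. prod_list (map (\<lambda>y. d y x) (y#xs)) * w $ x)"
    using Cons.prems(1)[of y] by (auto simp: mult.assoc)
  finally show ?case .
qed

lemma prod_list_filter: "prod_list (map g (filter P xs)) = prod_list (map (\<lambda>e. if P e then g e else 1) xs)"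
  by (induction xs) auto

lemma prod_list_concat: "prod_list (map h (concat xss)) = prod_list (map (\<lambda>xs. prod_list (map h xs)) xss)"
  by (induction xss) auto

lemma CZ_vec: "w \<in> carrier_vec (2^n) \<Longrightarrow> CZ n i j *\<^sub>v w = vec (2^n) (\<lambda>x. sg (bit x i \<and> bit x j) * w $ x)"
proof (intro eq_vecI)
  fix x assume w: "w \<in> carrier_vec (2^n)" and x: "x < dim_vec (vec (2^n) (\<lambda>x. sg (bit x i \<and> bit x j) * w $ x))"
  then have x': "x < 2^n" by simp
  have "(CZ n i j *\<^sub>v w) $ x = sg (bit x i \<and> bit x j) * w $ id x"
    by (rule mult_vec_single[OF CZ_carrier w x']) (use x' in \<open>auto simp: CZ_def sg_def\<close>)
  then show "(CZ n i j *\<^sub>v w) $ x = vec (2^n) (\<lambda>x. sg (bit x i \<and> bit x j) * w $ x) $ x" using x' by simp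
qed (simp add: CZ_def)

lemma edge_list_prod:
  "prod_list (map (\<lambda>(i,j). sg (bit x i \<and> bit x j)) (edge_list n E)) = sigmaE n E x"
  unfolding edge_list_def prod_list_filter prod_list_concat map_map sigmaE_def
  apply (simp add: comp_def prod_list_upt)
  by (intro prod.cong refl) (auto simp: sg_def)

lemma graph_state_gv: "graph_state n E = gv n E 0"
proof -
  have P: "plus_state n \<in> carrier_vec (2^n)" by (simp add: plus_state_def)
  have "graph_state n E = mat_prod_list n (map (\<lambda>(i,j). CZ n i j) (edge_list n E)) *\<^sub>v plus_state n"
    by (simp add: graph_state_def)
  also have "\<dots> = vec (2^n) (\<lambda>x. prod_list (map (\<lambda>(i,j). sg (bit x i \<and> bit x j)) (edge_list n E)) * plus_state n $ x)"
    by (rule mat_prod_list_diag[OF _ _ P]) (auto simp: CZ_vec)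
  also have "\<dots> = gv n E 0"
    by (intro eq_vecI) (auto simp: edge_list_prod plus_state_def gv_def chi_def cn_def sg_def[of False])
  finally show ?thesis .
qed


lemma pauli_X_idx: "pauli_X $$ (of_bool a, of_bool b) = (if a \<noteq> b then 1 else 0)"
  by (cases a; cases b) (simp_all add: pauli_X_def)
lemma pauli_Z_idx: "pauli_Z $$ (of_bool a, of_bool b) = (if a = b then sg a else 0)"
  by (cases a; cases b) (simp_all add: pauli_Z_def sg_def)

lemma X_entry:
  assumes "x < 2^n" "c < 2^n" "i < n"
  shows "on_qubit n i pauli_X $$ (x,c) = (if c = flip_bit i x then 1 else 0)"
proof -
  have "((\<forall>j<n. j \<noteq> i \<longrightarrow> bit x j = bit c j) \<and> bit x i \<noteq> bit c i) \<longleftrightarrow> c = flip_bit i x"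
  proof
    assume H: "(\<forall>j<n. j \<noteq> i \<longrightarrow> bit x j = bit c j) \<and> bit x i \<noteq> bit c i"
    show "c = flip_bit i x"
      by (rule eq_bits_lt[OF assms(2) flip_lt[OF assms(1,3)]]) (use H in \<open>auto simp: bit_flip_bit_iff\<close>)
  qed (auto simp: bit_flip_bit_iff)
  then show ?thesis using assms by (auto simp: on_qubit_def pauli_X_idx)
qed

lemma Z_entry:
  assumes "x < 2^n" "c < 2^n" "j < n"
  shows "on_qubit n j pauli_Z $$ (x,c) = (if c = x then sg (bit x j) else 0)"
proof -
  have "((\<forall>k<n. k \<noteq> j \<longrightarrow> bit x k = bit c k) \<and> bit x j = bit c j) \<longleftrightarrow> c = x"
  proof
    assume H: "(\<forall>k<n. k \<noteq> j \<longrightarrow> bit x k = bit c k) \<and> bit x j = bit c j"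
    show "c = x" by (rule eq_bits_lt[OF assms(2,1)]) (use H in auto)
  qed auto
  then show ?thesis using assms by (auto simp: on_qubit_def pauli_Z_idx)
qed

lemma X_vec:
  assumes w: "w \<in> carrier_vec (2^n)" and i: "i < n"
  shows "on_qubit n i pauli_X *\<^sub>v w = vec (2^n) (\<lambda>x. w $ flip_bit i x)"
proof (intro eq_vecI)
  fix x assume "x < dim_vec (vec (2^n) (\<lambda>x. w $ flip_bit i x))"
  then have x: "x < 2^n" by simp
  have "(on_qubit n i pauli_X *\<^sub>v w) $ x = 1 * w $ flip_bit i x"
    by (rule mult_vec_single[where h="flip_bit i", OF on_qubit_carrier w x flip_lt[OF x i]]) (simp add: X_entry x i)
  then show "(on_qubit n i pauli_X *\<^sub>v w) $ x = vec (2^n) (\<lambda>x. w $ flip_bit i x) $ x" using x by simp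
qed (simp add: on_qubit_def)

lemma Z_vec:
  assumes w: "w \<in> carrier_vec (2^n)" and j: "j < n"
  shows "on_qubit n j pauli_Z *\<^sub>v w = vec (2^n) (\<lambda>x. sg (bit x j) * w $ x)"
proof (intro eq_vecI)
  fix x assume "x < dim_vec (vec (2^n) (\<lambda>x. sg (bit x j) * w $ x))"
  then have x: "x < 2^n" by simp
  have "(on_qubit n j pauli_Z *\<^sub>v w) $ x = sg (bit x j) * w $ id x"
    by (rule mult_vec_single[where h=id, OF on_qubit_carrier w x]) (simp_all add: Z_entry x j)
  then show "(on_qubit n j pauli_Z *\<^sub>v w) $ x = vec (2^n) (\<lambda>x. sg (bit x j) * w $ x) $ x" using x by simp
qed (simp add: on_qubit_def)

definition dz :: "nat \<Rightarrow> (nat \<times> nat) set \<Rightarrow> nat \<Rightarrow> nat \<Rightarrow> complex" where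
  "dz n E i x = (\<Prod>j<n. sg (((i,j) \<in> E \<or> (j,i) \<in> E) \<and> bit x j))"

lemma stabilizer_carrier[simp]: "stabilizer n E i \<in> carrier_mat (2^n) (2^n)"
  unfolding stabilizer_def by (intro mult_carrier_mat[OF on_qubit_carrier] mat_prod_list_carrier) auto

lemma stab_vec:
  assumes w: "w \<in> carrier_vec (2^n)" and i: "i < n"
  shows "stabilizer n E i *\<^sub>v w = vec (2^n) (\<lambda>x. dz n E i (flip_bit i x) * w $ flip_bit i x)"
proof -
  let ?D = "mat_prod_list n (map (\<lambda>j. on_qubit n j pauli_Z) (filter (\<lambda>j. (i,j) \<in> E \<or> (j,i) \<in> E) [0..<n]))"
  have DC: "?D \<in> carrier_mat (2^n) (2^n)" by (intro mat_prod_list_carrier) auto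
  have "?D *\<^sub>v w = vec (2^n) (\<lambda>x. prod_list (map (\<lambda>j. sg (bit x j)) (filter (\<lambda>j. (i,j) \<in> E \<or> (j,i) \<in> E) [0..<n])) * w $ x)"
    by (rule mat_prod_list_diag[OF _ _ w]) (auto simp: Z_vec)
  also have "\<dots> = vec (2^n) (\<lambda>x. dz n E i x * w $ x)"
    unfolding prod_list_filter dz_def prod_list_upt
    by (intro eq_vecI) (auto intro!: prod.cong simp: sg_def)
  finally have D: "?D *\<^sub>v w = vec (2^n) (\<lambda>x. dz n E i x * w $ x)" .
  have "stabilizer n E i *\<^sub>v w = on_qubit n i pauli_X *\<^sub>v (?D *\<^sub>v w)"
    unfolding stabilizer_def using DC w by (simp add: assoc_mult_mat_vec[of _ "2^n" "2^n"])
  also have "\<dots> = vec (2^n) (\<lambda>x. dz n E i (flip_bit i x) * w $ flip_bit i x)"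
    unfolding D by (intro eq_vecI) (auto simp: X_vec i flip_lt)
  finally show ?thesis .
qed


lemma sg_simps: "sg False = 1" "sg True = -1" by (simp_all add: sg_def)

lemma dz_flip:
  assumes G: "simple_graph n E" and i: "i < n"
  shows "dz n E i (flip_bit i x) = dz n E i x"
  unfolding dz_def
proof (intro prod.cong refl)
  fix j assume "j \<in> {..<n}"
  have "((i,j) \<in> E \<or> (j,i) \<in> E) \<Longrightarrow> j \<noteq> i" using G by (auto simp: simple_graph_def)
  then show "sg (((i,j) \<in> E \<or> (j,i) \<in> E) \<and> bit (flip_bit i x) j) = sg (((i,j) \<in> E \<or> (j,i) \<in> E) \<and> bit x j)"
    by (cases "i = j") (auto simp: bit_flip_bit_iff sg_def)
qed

lemma chi_flip:
  assumes i: "i < n"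
  shows "chi n a (flip_bit i x) = sg (bit a i) * chi n a x"
proof -
  have "chi n a (flip_bit i x) = (\<Prod>k<n. sg (bit a k \<and> bit x k) * (if k = i then sg (bit a i) else 1))"
    unfolding chi_def by (intro prod.cong refl) (auto simp: bit_flip_bit_iff sg_def)
  also have "\<dots> = chi n a x * sg (bit a i)"
    unfolding prod.distrib chi_def using i by (simp add: prod.delta)
  finally show ?thesis by simp
qed

lemma dz_sq: "dz n E i x * dz n E i x = 1"
  unfolding dz_def prod.distrib[symmetric] by simp

lemma sigmaE_flip:
  assumes G: "simple_graph n E" and i: "i < n"
  shows "sigmaE n E (flip_bit i x) = sigmaE n E x * dz n E i x"
proof -
  have pt: "sg ((p,q) \<in> E \<and> bit (flip_bit i x) p \<and> bit (flip_bit i x) q)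
      = sg ((p,q) \<in> E \<and> bit x p \<and> bit x q) * (sg ((p,q) \<in> E \<and> p = i \<and> bit x q) * sg ((p,q) \<in> E \<and> q = i \<and> bit x p))"
    for p q
  proof (cases "(p,q) \<in> E")
    case True
    then have "p \<noteq> q" using G by (auto simp: simple_graph_def)
    then show ?thesis using True by (cases "bit x p"; cases "bit x q"; cases "p = i"; cases "q = i") (auto simp: bit_flip_bit_iff sg_def)
  qed (simp add: sg_def)
  have "sigmaE n E (flip_bit i x) = (\<Prod>p<n. \<Prod>q<n. sg ((p,q) \<in> E \<and> bit x p \<and> bit x q) * (sg ((p,q) \<in> E \<and> p = i \<and> bit x q) * sg ((p,q) \<in> E \<and> q = i \<and> bit x p)))"
    unfolding sigmaE_def pt ..
  also have "\<dots> = sigmaE n E x * ((\<Prod>p<n. \<Prod>q<n. sg ((p,q) \<in> E \<and> p = i \<and> bit x q)) * (\<Prod>p<n. \<Prod>q<n. sg ((p,q) \<in> E \<and> q = i \<and> bit x p)))"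
    unfolding sigmaE_def prod.distrib ..
  also have "(\<Prod>p<n. \<Prod>q<n. sg ((p,q) \<in> E \<and> p = i \<and> bit x q)) = (\<Prod>p<n. if p = i then (\<Prod>q<n. sg ((i,q) \<in> E \<and> bit x q)) else 1)"
    by (intro prod.cong refl) (auto simp: sg_def)
  also have "\<dots> = (\<Prod>q<n. sg ((i,q) \<in> E \<and> bit x q))" using i by (simp add: prod.delta)
  also have "(\<Prod>p<n. \<Prod>q<n. sg ((p,q) \<in> E \<and> q = i \<and> bit x p)) = (\<Prod>p<n. \<Prod>q<n. if q = i then sg ((p,i) \<in> E \<and> bit x p) else 1)"
    by (intro prod.cong refl) (auto simp: sg_def)
  also have "\<dots> = (\<Prod>p<n. sg ((p,i) \<in> E \<and> bit x p))" using i by (simp add: prod.delta)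
  also have "(\<Prod>q<n. sg ((i,q) \<in> E \<and> bit x q)) * (\<Prod>p<n. sg ((p,i) \<in> E \<and> bit x p)) = dz n E i x"
    unfolding dz_def prod.distrib[symmetric]
  proof (intro prod.cong refl)
    fix j
    have "\<not> ((i,j) \<in> E \<and> (j,i) \<in> E)"
    proof
      assume "(i,j) \<in> E \<and> (j,i) \<in> E"
      with G have "i < j \<and> j < i" unfolding simple_graph_def by blast
      then show False using less_asym by blast
    qed
    then show "sg ((i,j) \<in> E \<and> bit x j) * sg ((j,i) \<in> E \<and> bit x j) = sg (((i,j) \<in> E \<or> (j,i) \<in> E) \<and> bit x j)"
      by (auto simp: sg_def)
  qed
  finally show ?thesis .
qed

lemma stab_eigen:
  assumes G: "simple_graph n E" and i: "i < n"
  shows "stabilizer n E i *\<^sub>v gv n E a = sg (bit a i) \<cdot>\<^sub>v gv n E a"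
proof -
  have "stabilizer n E i *\<^sub>v gv n E a = vec (2^n) (\<lambda>x. dz n E i (flip_bit i x) * gv n E a $ flip_bit i x)"
    by (rule stab_vec[OF gv_carrier i])
  also have "\<dots> = sg (bit a i) \<cdot>\<^sub>v gv n E a"
  proof (intro eq_vecI)
    fix x assume "x < dim_vec (sg (bit a i) \<cdot>\<^sub>v gv n E a)"
    then have x: "x < 2^n" by (simp add: gv_def)
    have "dz n E i (flip_bit i x) * gv n E a $ flip_bit i x
        = (dz n E i x * dz n E i x) * sg (bit a i) * (cn n * chi n a x * sigmaE n E x)"
      using flip_lt[OF x i] by (simp add: dz_flip[OF G i] chi_flip[OF i] sigmaE_flip[OF G i] algebra_simps)
    then show "vec (2^n) (\<lambda>x. dz n E i (flip_bit i x) * gv n E a $ flip_bit i x) $ x = (sg (bit a i) \<cdot>\<^sub>v gv n E a) $ x"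
      using x by (simp add: dz_sq gv_def)
  qed (simp add: gv_def)
  finally show ?thesis .
qed


lemma mat_exp_carrier: "A \<in> carrier_mat m m \<Longrightarrow> mat_exp A \<in> carrier_mat m m"
  by (simp add: mat_exp_def)

lemma mat_exp_index: "A \<in> carrier_mat m m \<Longrightarrow> x < m \<Longrightarrow> y < m \<Longrightarrow>
   mat_exp A $$ (x,y) = (\<Sum>k. (A ^\<^sub>m k) $$ (x,y) / of_nat (fact k))"
  by (simp add: mat_exp_def)

lemma pow_entry_bound:
  fixes A :: "complex mat"
  assumes A: "A \<in> carrier_mat m m"
  defines "K \<equiv> (\<Sum>i<m. \<Sum>j<m. cmod (A $$ (i,j)))"
  shows "x < m \<Longrightarrow> y < m \<Longrightarrow> cmod ((A ^\<^sub>m k) $$ (x,y)) \<le> (real m * K) ^ k"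
proof (induction k arbitrary: x y)
  case 0 then show ?case using A by simp
next
  case (Suc k)
  have Kb: "cmod (A $$ (z,y)) \<le> K" if "z < m" for z
  proof -
    have "cmod (A $$ (z,y)) \<le> (\<Sum>j<m. cmod (A $$ (z,j)))"
      using Suc.prems(2) by (intro member_le_sum) auto
    also have "\<dots> \<le> K" unfolding K_def using that by (intro member_le_sum[of z "{..<m}" "\<lambda>i. \<Sum>j<m. cmod (A $$ (i,j))"]) (auto intro: sum_nonneg)
    finally show ?thesis .
  qed
  have K0: "K \<ge> 0" unfolding K_def by (intro sum_nonneg) auto
  have "(A ^\<^sub>m Suc k) $$ (x,y) = (\<Sum>z\<in>{0..<m}. (A ^\<^sub>m k) $$ (x,z) * A $$ (z,y))"
    using A Suc.prems by (simp add: scalar_prod_def row_def col_def pow_mat_dim_square)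
  then have "cmod ((A ^\<^sub>m Suc k) $$ (x,y)) \<le> (\<Sum>z\<in>{0..<m}. cmod ((A ^\<^sub>m k) $$ (x,z)) * cmod (A $$ (z,y)))"
    by (simp add: norm_mult[symmetric] norm_sum)
  also have "\<dots> \<le> (\<Sum>z\<in>{0..<m}. (real m * K) ^ k * K)"
    by (intro sum_mono mult_mono Suc.IH Kb) (use Suc.prems K0 in auto)
  also have "\<dots> = (real m * K) ^ Suc k" by (simp add: algebra_simps)
  finally show ?case .
qed

lemma pow_entry_summable:
  fixes A :: "complex mat"
  assumes A: "A \<in> carrier_mat m m" and "x < m" "y < m"
  shows "summable (\<lambda>k. (A ^\<^sub>m k) $$ (x,y) / of_nat (fact k))"
proof -
  define C where "C = real m * (\<Sum>i<m. \<Sum>j<m. cmod (A $$ (i,j)))"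
  have "summable (\<lambda>k. C ^ k /\<^sub>R fact k)" by (rule summable_exp_generic)
  then have S: "summable (\<lambda>k. C ^ k / fact k)" by (simp add: divide_inverse mult.commute)
  show ?thesis
  proof (rule summable_comparison_test[OF _ S], intro exI allI impI)
    fix k :: nat
    have "norm ((A ^\<^sub>m k) $$ (x,y) / of_nat (fact k)) = cmod ((A ^\<^sub>m k) $$ (x,y)) / fact k"
      by (simp add: norm_divide)
    also have "\<dots> \<le> C ^ k / fact k"
      unfolding C_def by (intro divide_right_mono pow_entry_bound[OF A assms(2,3)]) auto
    finally show "norm ((A ^\<^sub>m k) $$ (x,y) / of_nat (fact k)) \<le> C ^ k / fact k" .
  qed
qed

lemma pow_eigen:
  fixes A :: "complex mat"
  assumes A: "A \<in> carrier_mat m m" and v: "v \<in> carrier_vec m" and ev: "A *\<^sub>v v = \<mu> \<cdot>\<^sub>v v"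
  shows "(A ^\<^sub>m k) *\<^sub>v v = (\<mu> ^ k) \<cdot>\<^sub>v v"
proof (induction k)
  case 0 then show ?case using A v by simp
next
  case (Suc k)
  have "(A ^\<^sub>m Suc k) *\<^sub>v v = (A ^\<^sub>m k) *\<^sub>v (A *\<^sub>v v)"
    using A v by (simp add: assoc_mult_mat_vec[of _ m m] pow_carrier_mat)
  also have "\<dots> = \<mu> \<cdot>\<^sub>v ((A ^\<^sub>m k) *\<^sub>v v)"
    unfolding ev using A v by (intro mult_mat_vec[of _ m m]) (auto simp: pow_carrier_mat)
  also have "\<dots> = (\<mu> ^ Suc k) \<cdot>\<^sub>v v" unfolding Suc by (simp add: smult_smult_assoc mult.commute)
  finally show ?case .
qed

lemma mat_exp_eigen:
  fixes A :: "complex mat"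
  assumes A: "A \<in> carrier_mat m m" and v: "v \<in> carrier_vec m" and ev: "A *\<^sub>v v = \<mu> \<cdot>\<^sub>v v"
  shows "mat_exp A *\<^sub>v v = exp \<mu> \<cdot>\<^sub>v v"
proof (intro eq_vecI)
  fix x assume "x < dim_vec (exp \<mu> \<cdot>\<^sub>v v)"
  then have x: "x < m" using v by simp
  have "(mat_exp A *\<^sub>v v) $ x = (\<Sum>y\<in>{0..<m}. mat_exp A $$ (x,y) * v $ y)"
    using A v x mat_exp_carrier[OF A] by (simp add: scalar_prod_def row_def)
  also have "\<dots> = (\<Sum>y\<in>{0..<m}. (\<Sum>k. (A ^\<^sub>m k) $$ (x,y) / of_nat (fact k) * v $ y))"
  proof (intro sum.cong refl)
    fix y assume y: "y \<in> {0..<m}"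
    then have "summable (\<lambda>k. (A ^\<^sub>m k) $$ (x,y) / of_nat (fact k))" using A x by (intro pow_entry_summable) auto
    then have "(\<Sum>k. (A ^\<^sub>m k) $$ (x,y) / of_nat (fact k)) * v $ y = (\<Sum>k. (A ^\<^sub>m k) $$ (x,y) / of_nat (fact k) * v $ y)"
      by (rule suminf_mult2)
    then show "mat_exp A $$ (x,y) * v $ y = (\<Sum>k. (A ^\<^sub>m k) $$ (x,y) / of_nat (fact k) * v $ y)"
      using A x y by (simp only: mat_exp_index atLeastLessThan_iff)
  qed
  also have "\<dots> = (\<Sum>k. (\<Sum>y\<in>{0..<m}. (A ^\<^sub>m k) $$ (x,y) / of_nat (fact k) * v $ y))"
  proof (rule suminf_sum[symmetric])
    fix y assume y: "y \<in> {0..<m}"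
    then have "summable (\<lambda>k. (A ^\<^sub>m k) $$ (x,y) / of_nat (fact k))" using A x by (intro pow_entry_summable) auto
    then show "summable (\<lambda>k. (A ^\<^sub>m k) $$ (x,y) / of_nat (fact k) * v $ y)"
      by (rule summable_mult2)
  qed
  also have "\<dots> = (\<Sum>k. ((A ^\<^sub>m k) *\<^sub>v v) $ x / of_nat (fact k))"
  proof (intro suminf_cong)
    fix k
    have "((A ^\<^sub>m k) *\<^sub>v v) $ x = (\<Sum>y\<in>{0..<m}. (A ^\<^sub>m k) $$ (x,y) * v $ y)"
      using A v x by (simp add: scalar_prod_def row_def pow_mat_dim_square)
    then show "(\<Sum>y\<in>{0..<m}. (A ^\<^sub>m k) $$ (x,y) / of_nat (fact k) * v $ y) = ((A ^\<^sub>m k) *\<^sub>v v) $ x / of_nat (fact k)"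
      by (simp add: sum_divide_distrib algebra_simps)
  qed
  also have "\<dots> = (\<Sum>k. \<mu> ^ k / of_nat (fact k)) * v $ x"
  proof -
    have S: "summable (\<lambda>k. \<mu> ^ k / of_nat (fact k))"
      using summable_exp_generic[of \<mu>] by (simp add: scaleR_conv_of_real divide_inverse mult.commute)
    have "(\<Sum>k. \<mu> ^ k / of_nat (fact k)) * v $ x = (\<Sum>k. \<mu> ^ k / of_nat (fact k) * v $ x)"
      by (rule suminf_mult2[OF S])
    then show ?thesis unfolding pow_eigen[OF A v ev] using x v by simp
  qed
  also have "(\<Sum>k. \<mu> ^ k / of_nat (fact k)) = exp \<mu>"
    unfolding exp_def by (simp add: scaleR_conv_of_real divide_inverse mult.commute)
  finally show "(mat_exp A *\<^sub>v v) $ x = (exp \<mu> \<cdot>\<^sub>v v) $ x" using x v by simp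
qed (use v A in \<open>simp add: mat_exp_def\<close>)


lemma dim_vec_gv[simp]: "dim_vec (gv n E a) = 2^n" by (simp add: gv_def)

lemma cnj_sg[simp]: "cnj (sg b) = sg b" by (simp add: sg_def)
lemma cnj_chi[simp]: "cnj (chi n a x) = chi n a x" by (simp add: chi_def cnj_prod)
lemma cnj_sigmaE[simp]: "cnj (sigmaE n E x) = sigmaE n E x" by (simp add: sigmaE_def cnj_prod)
lemma cnj_cn[simp]: "cnj (cn n) = cn n" by (simp add: cn_def)
lemma cn_sq: "cn n * cn n = 1 / 2^n"
proof -
  have "sqrt (2^n) * sqrt (2^n) = (2::real)^n" by (simp add: real_sqrt_mult_self)
  then have "(1 / sqrt (2^n)) * (1 / sqrt (2^n)) = 1 / (2::real)^n" by (simp add: field_simps)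
  then have "complex_of_real ((1 / sqrt (2^n)) * (1 / sqrt (2^n))) = complex_of_real (1 / 2^n)" by simp
  then show ?thesis unfolding cn_def of_real_mult by simp
qed
lemma chi_sq: "chi n a x * chi n a x = 1" unfolding chi_def prod.distrib[symmetric] by simp
lemma sigmaE_sq: "sigmaE n E x * sigmaE n E x = 1" unfolding sigmaE_def prod.distrib[symmetric] by simp

lemma chi_sum:
  assumes x: "x < 2^n" and y: "y < 2^n"
  shows "(\<Sum>a<(2::nat)^n. chi n a y * chi n a x) = (if x = y then 2^n else 0)"
proof -
  have "(\<Sum>a<(2::nat)^n. chi n a y * chi n a x) = (\<Sum>a<(2::nat)^n. \<Prod>i<n. sg (bit a i \<and> bit y i) * sg (bit a i \<and> bit x i))"
    unfolding chi_def prod.distrib ..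
  also have "\<dots> = (\<Prod>i<n. 1 + sg (bit y i) * sg (bit x i))"
    by (subst bits_sum_prod) (simp add: sg_def)
  also have "\<dots> = (if x = y then 2^n else 0)"
  proof (cases "x = y")
    case True then show ?thesis by simp
  next
    case False
    then obtain i where i: "i < n" "bit x i \<noteq> bit y i" using eq_bits_lt[OF x y] by blast
    have z: "1 + sg (bit y i) * sg (bit x i) = 0" using i(2) by (cases "bit x i") (auto simp: sg_def)
    have "(\<Prod>i<n. 1 + sg (bit y i) * sg (bit x i)) = 0"
      by (rule prod_zero) (use i(1) z in blast)+
    then show ?thesis using False by simp
  qed
  finally show ?thesis .
qed

lemma gv_complete:
  assumes x: "x < 2^n" and y: "y < 2^n"
  shows "(\<Sum>a<(2::nat)^n. gv n E a $ y * cnj (gv n E a $ x)) = (if x = y then 1 else 0)"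
proof -
  have "(\<Sum>a<(2::nat)^n. gv n E a $ y * cnj (gv n E a $ x))
      = (cn n * cn n * sigmaE n E y * sigmaE n E x) * (\<Sum>a<(2::nat)^n. chi n a y * chi n a x)"
    using x y by (simp add: sum_distrib_left algebra_simps)
  also have "\<dots> = (if x = y then 1 else 0)"
    using x y by (simp add: chi_sum cn_sq sigmaE_sq)
  finally show ?thesis .
qed

lemma gv_norm: "gv n E a \<bullet>c gv n E a = 1"
proof -
  have "gv n E a \<bullet>c gv n E a = (\<Sum>x\<in>{0..<2^n}. cn n * cn n * (chi n a x * chi n a x) * (sigmaE n E x * sigmaE n E x))"
    by (simp add: scalar_prod_def gv_def algebra_simps)
  also have "\<dots> = 1" by (simp add: chi_sq sigmaE_sq cn_sq)
  finally show ?thesis .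
qed

lemma trace_basis:
  assumes M: "M \<in> carrier_mat (2^n) (2^n)"
  shows "trace_mat M = (\<Sum>a<(2::nat)^n. (M *\<^sub>v gv n E a) \<bullet>c gv n E a)"
proof -
  have "(\<Sum>a<(2::nat)^n. (M *\<^sub>v gv n E a) \<bullet>c gv n E a)
      = (\<Sum>a<(2::nat)^n. \<Sum>x<(2::nat)^n. \<Sum>y<(2::nat)^n. M $$ (x,y) * (gv n E a $ y * cnj (gv n E a $ x)))"
  proof (intro sum.cong refl)
    fix a
    let ?g = "gv n E a"
    have "(M *\<^sub>v ?g) \<bullet>c ?g = (\<Sum>x\<in>{0..<2^n}. (M *\<^sub>v ?g) $ x * cnj (?g $ x))"
      unfolding scalar_prod_def by (intro sum.cong) (auto simp: gv_def)
    also have "\<dots> = (\<Sum>x<(2::nat)^n. (\<Sum>y<(2::nat)^n. M $$ (x,y) * ?g $ y) * cnj (?g $ x))"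
    proof (intro sum.cong refl)
      fix x assume x: "x \<in> {..<(2::nat)^n}"
      have "(M *\<^sub>v ?g) $ x = row M x \<bullet> ?g" using M x by simp
      also have "\<dots> = (\<Sum>y<(2::nat)^n. M $$ (x,y) * ?g $ y)"
        unfolding scalar_prod_def using M x by (intro sum.cong) auto
      finally show "(M *\<^sub>v ?g) $ x * cnj (?g $ x) = (\<Sum>y<(2::nat)^n. M $$ (x,y) * ?g $ y) * cnj (?g $ x)" by simp
    qed (simp add: atLeast0LessThan)
    also have "\<dots> = (\<Sum>x<(2::nat)^n. \<Sum>y<(2::nat)^n. M $$ (x,y) * (?g $ y * cnj (?g $ x)))"
      by (simp add: sum_distrib_right mult.assoc)
    finally show "(M *\<^sub>v ?g) \<bullet>c ?g = (\<Sum>x<(2::nat)^n. \<Sum>y<(2::nat)^n. M $$ (x,y) * (?g $ y * cnj (?g $ x)))" .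
  qed
  also have "\<dots> = (\<Sum>x<(2::nat)^n. \<Sum>a<(2::nat)^n. \<Sum>y<(2::nat)^n. M $$ (x,y) * (gv n E a $ y * cnj (gv n E a $ x)))"
    by (rule sum.swap)
  also have "\<dots> = (\<Sum>x<(2::nat)^n. \<Sum>y<(2::nat)^n. \<Sum>a<(2::nat)^n. M $$ (x,y) * (gv n E a $ y * cnj (gv n E a $ x)))"
    by (intro sum.cong refl sum.swap)
  also have "\<dots> = (\<Sum>x<(2::nat)^n. \<Sum>y<(2::nat)^n. M $$ (x,y) * (\<Sum>a<(2::nat)^n. gv n E a $ y * cnj (gv n E a $ x)))"
    by (simp only: sum_distrib_left)
  also have "\<dots> = (\<Sum>x<(2::nat)^n. \<Sum>y<(2::nat)^n. if y = x then M $$ (x,y) else 0)"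
    by (intro sum.cong refl) (auto simp del: gv_index simp add: gv_complete)
  also have "\<dots> = trace_mat M" using M by (simp add: trace_mat_def)
  finally show ?thesis by simp
qed


lemma pow1_mat: "A \<in> carrier_mat m m \<Longrightarrow> A ^\<^sub>m 1 = A"
  by simp

lemma stab_S_carrier: "stab_S n E l \<in> carrier_mat (2^n) (2^n)"
  unfolding stab_S_def by (intro mat_prod_list_carrier) (auto intro: pow_carrier_mat)

lemma stab_S_eigen:
  assumes G: "simple_graph n E"
  shows "stab_S n E l *\<^sub>v gv n E a = (\<Prod>i<n. sg (l i \<and> bit a i)) \<cdot>\<^sub>v gv n E a"
proof -
  have "stab_S n E l *\<^sub>v gv n E a = prod_list (map (\<lambda>i. sg (l i \<and> bit a i)) [0..<n]) \<cdot>\<^sub>v gv n E a"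
    unfolding stab_S_def
  proof (rule mat_prod_list_eigen)
    fix i assume "i \<in> set [0..<n]"
    then have i: "i < n" by simp
    show "stabilizer n E i ^\<^sub>m of_bool (l i) \<in> carrier_mat (2^n) (2^n)" by (intro pow_carrier_mat) simp
    show "stabilizer n E i ^\<^sub>m of_bool (l i) *\<^sub>v gv n E a = sg (l i \<and> bit a i) \<cdot>\<^sub>v gv n E a"
    proof (cases "l i")
      case True
      then show ?thesis using stab_eigen[OF G i, of a] by (simp add: pow1_mat[OF stabilizer_carrier])
    next
      case False
      have "dim_row (stabilizer n E i) = 2^n" using stabilizer_carrier by blast
      then show ?thesis using False by (simp add: sg_def)
    qed
  qed simp
  then show ?thesis by (simp add: prod_list_upt)
qed

lemma ham_carrier: "graph_hamiltonian n E \<in> carrier_mat (2^n) (2^n)"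
  unfolding graph_hamiltonian_def by (intro smult_carrier_mat mat_sum_list_carrier) auto

lemma ham_eigen:
  assumes G: "simple_graph n E"
  shows "graph_hamiltonian n E *\<^sub>v gv n E a = (- (\<Sum>i<n. sg (bit a i))) \<cdot>\<^sub>v gv n E a"
proof -
  have SC: "mat_sum_list n (map (stabilizer n E) [0..<n]) \<in> carrier_mat (2^n) (2^n)"
    by (intro mat_sum_list_carrier) auto
  have "mat_sum_list n (map (stabilizer n E) [0..<n]) *\<^sub>v gv n E a = sum_list (map (\<lambda>i. sg (bit a i)) [0..<n]) \<cdot>\<^sub>v gv n E a"
    by (rule mat_sum_list_eigen) (auto simp: stab_eigen[OF G])
  then show ?thesis
    unfolding graph_hamiltonian_def using SC
    by (simp add: smult_mat_vec[OF SC] sum_list_upt smult_smult_assoc)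
qed

definition lam :: "nat \<Rightarrow> nat \<Rightarrow> real" where
  "lam n a = (\<Sum>i<n. if bit a i then -1 else 1)"

lemma sum_sg: "(\<Sum>i<n. sg (bit a i)) = complex_of_real (lam n a)"
  by (simp add: lam_def sg_def of_real_sum if_distrib cong: if_cong)

lemma exp_lam: "exp (\<beta> * lam n a) = (\<Prod>i<n. if bit a i then exp (-\<beta>) else exp \<beta>)"
  unfolding lam_def sum_distrib_left by (subst exp_sum) (auto intro!: prod.cong)

definition sr :: "nat \<Rightarrow> (nat \<Rightarrow> bool) \<Rightarrow> nat \<Rightarrow> real" where
  "sr n l a = (\<Prod>i<n. if l i \<and> bit a i then -1 else 1)"

lemma prod_sg: "(\<Prod>i<n. sg (l i \<and> bit a i)) = complex_of_real (sr n l a)"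
  by (simp add: sr_def sg_def of_real_prod if_distrib cong: if_cong)

lemma thermal_main:
  fixes \<beta> :: real
  assumes G: "simple_graph n E"
  defines "Zr \<equiv> (exp \<beta> + exp (-\<beta>)) ^ n"
  shows "thermal_state n E \<beta> *\<^sub>v gv n E a = complex_of_real (exp (\<beta> * lam n a) / Zr) \<cdot>\<^sub>v gv n E a"
    and "thermal_state n E \<beta> \<in> carrier_mat (2^n) (2^n)"
proof -
  define A where "A = complex_of_real (- \<beta>) \<cdot>\<^sub>m graph_hamiltonian n E"
  have AC: "A \<in> carrier_mat (2^n) (2^n)" unfolding A_def using ham_carrier by simp
  have AE: "A *\<^sub>v gv n E b = complex_of_real (\<beta> * lam n b) \<cdot>\<^sub>v gv n E b" for b
    unfolding A_def by (simp add: smult_mat_vec[OF ham_carrier] ham_eigen[OF G] sum_sg smult_smult_assoc)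
  have ME: "mat_exp A *\<^sub>v gv n E b = complex_of_real (exp (\<beta> * lam n b)) \<cdot>\<^sub>v gv n E b" for b
    using mat_exp_eigen[OF AC gv_carrier AE] by (simp only: exp_of_real)
  have MC: "mat_exp A \<in> carrier_mat (2^n) (2^n)" by (rule mat_exp_carrier[OF AC])
  have "trace_mat (mat_exp A) = (\<Sum>b<(2::nat)^n. (mat_exp A *\<^sub>v gv n E b) \<bullet>c gv n E b)"
    by (rule trace_basis[OF MC])
  also have "\<dots> = (\<Sum>b<(2::nat)^n. complex_of_real (exp (\<beta> * lam n b)))"
    by (intro sum.cong refl) (simp add: ME gv_norm[unfolded] smult_scalar_prod_distrib[of _ "2^n"])
  also have "\<dots> = complex_of_real Zr"
    unfolding of_real_sum[symmetric] exp_lam Zr_def by (subst bits_sum_prod) (simp add: add.commute)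
  finally have Z: "trace_mat (mat_exp A) = complex_of_real Zr" .
  have T: "thermal_state n E \<beta> = (1 / complex_of_real Zr) \<cdot>\<^sub>m mat_exp A"
    unfolding thermal_state_def A_def[symmetric] Let_def Z ..
  show "thermal_state n E \<beta> *\<^sub>v gv n E a = complex_of_real (exp (\<beta> * lam n a) / Zr) \<cdot>\<^sub>v gv n E a"
    unfolding T by (simp add: smult_mat_vec[OF MC] ME smult_smult_assoc)
  show "thermal_state n E \<beta> \<in> carrier_mat (2^n) (2^n)" unfolding T using MC by simp
qed


lemma sum_er: "(\<Sum>a<(2::nat)^n. exp (\<beta> * lam n a)) = (exp \<beta> + exp (-\<beta>)) ^ n"
  unfolding exp_lam by (subst bits_sum_prod) (simp add: add.commute)

lemma sum_er_sr: "(\<Sum>a<(2::nat)^n. exp (\<beta> * lam n a) * sr n l a) = (\<Prod>i<n. exp \<beta> + (if l i then -1 else 1) * exp (-\<beta>))"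
  unfolding exp_lam sr_def prod.distrib[symmetric]
  by (subst bits_sum_prod) (intro prod.cong refl; simp add: add.commute)

lemma fid_val:
  fixes \<beta> :: real
  assumes G: "simple_graph n E"
  shows "graph_fidelity n E (thermal_state n E \<beta>) = complex_of_real (exp (\<beta> * real n) / (exp \<beta> + exp (-\<beta>)) ^ n)"
proof -
  have l0: "lam n 0 = real n" by (simp add: lam_def)
  show ?thesis
    unfolding graph_fidelity_def graph_state_gv thermal_main(1)[OF G]
    by (simp add: smult_scalar_prod_distrib[of _ "2^n"] gv_norm l0)
qed

lemma P_vec:
  assumes G: "simple_graph n E"
  shows "((1/2) \<cdot>\<^sub>m (1\<^sub>m (2^n) + stab_S n E l)) *\<^sub>v gv n E a = ((1 + complex_of_real (sr n l a)) / 2) \<cdot>\<^sub>v gv n E a"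
proof -
  have SC: "stab_S n E l \<in> carrier_mat (2^n) (2^n)" by (rule stab_S_carrier)
  have "((1/2) \<cdot>\<^sub>m (1\<^sub>m (2^n) + stab_S n E l)) *\<^sub>v gv n E a = (1/2) \<cdot>\<^sub>v ((1\<^sub>m (2^n) + stab_S n E l) *\<^sub>v gv n E a)"
    using SC by (intro smult_mat_vec[of _ "2^n" "2^n"]) auto
  also have "(1\<^sub>m (2^n) + stab_S n E l) *\<^sub>v gv n E a = gv n E a + complex_of_real (sr n l a) \<cdot>\<^sub>v gv n E a"
    using SC by (simp add: add_mult_distrib_mat_vec[of _ "2^n" "2^n"] stab_S_eigen[OF G] prod_sg)
  also have "(1/2) \<cdot>\<^sub>v (gv n E a + complex_of_real (sr n l a) \<cdot>\<^sub>v gv n E a) = ((1 + complex_of_real (sr n l a)) / 2) \<cdot>\<^sub>v gv n E a"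
    by (intro eq_vecI) (auto simp: algebra_simps)
  finally show ?thesis .
qed

lemma pp_val:
  fixes \<beta> :: real
  assumes G: "simple_graph n E"
  shows "prob_plus n (stab_S n E l) (thermal_state n E \<beta>)
     = (1 + (\<Prod>i<n. exp \<beta> + (if l i then -1 else 1) * exp (-\<beta>)) / (exp \<beta> + exp (-\<beta>)) ^ n) / 2"
proof -
  define Zr where "Zr = (exp \<beta> + exp (-\<beta>)) ^ n"
  have Zpos: "Zr > 0" unfolding Zr_def by (intro zero_less_power add_pos_pos) auto
  define P where "P = (1/2) \<cdot>\<^sub>m (1\<^sub>m (2^n) + stab_S n E l)"
  have PC: "P \<in> carrier_mat (2^n) (2^n)" unfolding P_def using stab_S_carrier by simp
  note RC = thermal_main(2)[OF G, of \<beta>]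
  have "trace_mat (P * thermal_state n E \<beta>) = (\<Sum>a<(2::nat)^n. ((P * thermal_state n E \<beta>) *\<^sub>v gv n E a) \<bullet>c gv n E a)"
    by (rule trace_basis) (use PC RC in simp)
  also have "\<dots> = (\<Sum>a<(2::nat)^n. complex_of_real (exp (\<beta> * lam n a) / Zr * ((1 + sr n l a) / 2)))"
  proof (intro sum.cong refl)
    fix a
    have "(P * thermal_state n E \<beta>) *\<^sub>v gv n E a = P *\<^sub>v (thermal_state n E \<beta> *\<^sub>v gv n E a)"
      using PC RC by (simp add: assoc_mult_mat_vec[of _ "2^n" "2^n"])
    also have "\<dots> = complex_of_real (exp (\<beta> * lam n a) / Zr) \<cdot>\<^sub>v (P *\<^sub>v gv n E a)"
      unfolding thermal_main(1)[OF G] Zr_def using PC by (intro mult_mat_vec[of _ "2^n" "2^n"]) auto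
    also have "\<dots> = (complex_of_real (exp (\<beta> * lam n a) / Zr) * ((1 + complex_of_real (sr n l a)) / 2)) \<cdot>\<^sub>v gv n E a"
      unfolding P_def P_vec[OF G] by (simp add: smult_smult_assoc)
    finally have "(P * thermal_state n E \<beta>) *\<^sub>v gv n E a = (complex_of_real (exp (\<beta> * lam n a) / Zr) * ((1 + complex_of_real (sr n l a)) / 2)) \<cdot>\<^sub>v gv n E a" .
    then show "((P * thermal_state n E \<beta>) *\<^sub>v gv n E a) \<bullet>c gv n E a = complex_of_real (exp (\<beta> * lam n a) / Zr * ((1 + sr n l a) / 2))"
      by (simp add: smult_scalar_prod_distrib[of _ "2^n"] gv_norm)
  qed
  finally have T: "trace_mat (P * thermal_state n E \<beta>) = complex_of_real (\<Sum>a<(2::nat)^n. exp (\<beta> * lam n a) / Zr * ((1 + sr n l a) / 2))"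
    by (simp add: of_real_sum)
  have "(\<Sum>a<(2::nat)^n. exp (\<beta> * lam n a) / Zr * ((1 + sr n l a) / 2))
      = ((\<Sum>a<(2::nat)^n. exp (\<beta> * lam n a)) + (\<Sum>a<(2::nat)^n. exp (\<beta> * lam n a) * sr n l a)) / (2 * Zr)"
    by (simp add: sum_divide_distrib[symmetric] sum.distrib[symmetric] algebra_simps)
  also have "\<dots> = (1 + (\<Prod>i<n. exp \<beta> + (if l i then -1 else 1) * exp (-\<beta>)) / Zr) / 2"
    unfolding sum_er sum_er_sr Zr_def[symmetric] using Zpos by (simp add: field_simps)
  finally show ?thesis unfolding prob_plus_def P_def[symmetric] T Zr_def by simp
qed


lemma (in prob_space) expectation_pm1:
  assumes Xm: "random_variable borel Y"
    and pm: "AE \<omega> in M. Y \<omega> \<in> {1, -1}"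
  shows "expectation Y = 2 * prob {\<omega> \<in> space M. Y \<omega> = 1} - 1"
proof -
  define S where "S = {\<omega> \<in> space M. Y \<omega> = 1}"
  have Sm: "S \<in> events" unfolding S_def using Xm by measurable
  have "AE \<omega> in M. Y \<omega> = 2 * indicator S \<omega> - 1"
    using pm AE_space
  proof eventually_elim
    case (elim \<omega>)
    then show ?case by (auto simp: S_def indicator_def)
  qed
  then have "expectation Y = expectation (\<lambda>\<omega>. 2 * indicator S \<omega> - 1)"
    by (intro integral_cong_AE) (use Xm Sm in auto)
  also have "\<dots> = 2 * prob S - 1"
  proof -
    have i1: "integrable M (\<lambda>\<omega>. indicator S \<omega> :: real)"
      using Sm by (intro integrable_real_indicator) (auto simp: emeasure_eq_measure)
    have "expectation (\<lambda>\<omega>. 2 * indicator S \<omega> - 1) = expectation (\<lambda>\<omega>. 2 * indicator S \<omega>) - expectation (\<lambda>\<omega>. 1::real)"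
      using i1 by (intro Bochner_Integration.integral_diff) auto
    also have "\<dots> = 2 * prob S - 1"
      using Sm by (simp add: prob_space)
    finally show ?thesis .
  qed
  finally show ?thesis unfolding S_def .
qed

lemma (in prob_space) hoeffding_bound:
  assumes indep: "indep_vars (\<lambda>_. borel) X UNIV"
    and pm: "\<And>i. AE \<omega> in M. X i \<omega> \<in> {1, -1}"
    and ex: "\<And>i. expectation (X i) = c"
    and N: "N > 0" and eps: "\<epsilon> \<ge> 0"
  shows "prob {\<omega> \<in> space M. \<bar>(\<Sum>i<N. X i \<omega>) - real N * c\<bar> \<ge> \<epsilon>} \<le> 2 * exp (- \<epsilon>\<^sup>2 / (2 * real N))"
proof -
  interpret H: Hoeffding_ineq M "{..<N}" X "\<lambda>_. -1" "\<lambda>_. 1" "real N * c"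
  proof unfold_locales
    show "indep_vars (\<lambda>_. borel) X {..<N}" using indep by (rule indep_vars_subset) auto
    show "AE x in M. X i x \<in> {-1..1}" if "i \<in> {..<N}" for i
      using pm[of i] by eventually_elim auto
    show "real N * c \<equiv> \<Sum>i\<in>{..<N}. expectation (X i)" by (simp add: ex)
  qed simp
  have pos: "(\<Sum>i\<in>{..<N}. (1 - (-1::real))\<^sup>2) > 0" using N by simp
  have "prob {\<omega> \<in> space M. \<bar>(\<Sum>i<N. X i \<omega>) - real N * c\<bar> \<ge> \<epsilon>} \<le> 2 * exp (-2 * \<epsilon>\<^sup>2 / (\<Sum>i\<in>{..<N}. (1 - (-1::real))\<^sup>2))"
    by (rule H.Hoeffding_ineq_abs_ge[OF eps pos])
  also have "(-2 * \<epsilon>\<^sup>2 / (\<Sum>i\<in>{..<N}. (1 - (-1::real))\<^sup>2)) = - \<epsilon>\<^sup>2 / (2 * real N)"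
    using N by (simp add: field_simps power2_eq_square)
  finally show ?thesis .
qed

lemma (in prob_space) slln_pm1:
  assumes indep: "indep_vars (\<lambda>_. borel) X UNIV"
    and pm: "\<And>i. AE \<omega> in M. X i \<omega> \<in> {1, -1}"
    and ex: "\<And>i. expectation (X i) = c"
  shows "AE \<omega> in M. (\<lambda>N. (\<Sum>i<N. X i \<omega>) / real N) \<longlonglongrightarrow> c"
proof -
  have Xm[measurable]: "X i \<in> borel_measurable M" for i
    using indep unfolding indep_vars_def by auto
  define A where "A m N = {\<omega> \<in> space M. real N / real (Suc m) \<le> \<bar>(\<Sum>i<N. X i \<omega>) - real N * c\<bar>}" for m N
  have Am[measurable]: "A m N \<in> events" for m N unfolding A_def by measurable
  have BC: "AE \<omega> in M. eventually (\<lambda>N. \<omega> \<in> space M - A m N) sequentially" for m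
  proof (rule borel_cantelli_AE1)
    show "A m N \<in> events" for N by (rule Am)
    show "emeasure M (A m N) < \<infinity>" for N by (simp add: emeasure_eq_measure)
    define r where "r = exp (- (1 / real (Suc m))\<^sup>2 / 2)"
    have r: "0 \<le> r" "r < 1" unfolding r_def by auto
    have "summable (\<lambda>N. 2 * r ^ N)" using r by (intro summable_mult summable_geometric) auto
    then show "summable (\<lambda>N. measure M (A m N))"
    proof (rule summable_comparison_test'[where N=1])
      fix N :: nat assume "N \<ge> 1"
      then have N: "N > 0" by simp
      have "measure M (A m N) \<le> 2 * exp (- (real N / real (Suc m))\<^sup>2 / (2 * real N))"
        unfolding A_def by (rule hoeffding_bound[OF indep pm ex N]) simp
      also have "- (real N / real (Suc m))\<^sup>2 / (2 * real N) = real N * (- (1 / real (Suc m))\<^sup>2 / 2)"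
      proof -
        have "\<And>s::real. s > 0 \<Longrightarrow> - (real N / s)\<^sup>2 / (2 * real N) = real N * (- (1 / s)\<^sup>2 / 2)"
          using N by (simp add: field_simps power2_eq_square)
        then show ?thesis by (metis of_nat_0_less_iff zero_less_Suc)
      qed
      also have "exp (real N * (- (1 / real (Suc m))\<^sup>2 / 2)) = r ^ N"
        unfolding r_def by (rule exp_of_nat_mult)
      finally show "norm (measure M (A m N)) \<le> 2 * r ^ N" by simp
    qed
  qed
  then have "AE \<omega> in M. \<forall>m. eventually (\<lambda>N. \<omega> \<in> space M - A m N) sequentially"
    by (simp add: AE_all_countable)
  then show ?thesis
  proof eventually_elim
    case (elim \<omega>)
    show ?case
    proof (rule tendstoI)
      fix e :: real assume e: "e > 0"
      obtain m where m: "inverse (real (Suc m)) < e" using reals_Archimedean[OF e] by blast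
      have "eventually (\<lambda>N. \<omega> \<in> space M - A m N \<and> N \<ge> 1) sequentially"
        using elim[rule_format, of m] eventually_ge_at_top[of 1] by (rule eventually_conj)
      then show "eventually (\<lambda>N. dist ((\<Sum>i<N. X i \<omega>) / real N) c < e) sequentially"
      proof (rule eventually_mono)
        fix N assume H: "\<omega> \<in> space M - A m N \<and> N \<ge> 1"
        then have N: "real N > 0" by simp
        have "\<bar>(\<Sum>i<N. X i \<omega>) - real N * c\<bar> < real N / real (Suc m)"
          using H by (auto simp: A_def)
        then have "\<bar>(\<Sum>i<N. X i \<omega>) - real N * c\<bar> / real N < 1 / real (Suc m)"
          using N by (simp add: field_simps)
        moreover have "\<bar>(\<Sum>i<N. X i \<omega>) - real N * c\<bar> / real N = dist ((\<Sum>i<N. X i \<omega>) / real N) c"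
          using N by (simp add: dist_real_def field_simps abs_div_pos[symmetric])
        ultimately show "dist ((\<Sum>i<N. X i \<omega>) / real N) c < e"
          using m by (simp add: inverse_eq_divide)
      qed
    qed
  qed
qed


lemma coeff_prod_lin:
  fixes a :: "nat \<Rightarrow> real"
  shows "coeff (\<Prod>i<n. [:1, a i:]) 0 = 1 \<and> coeff (\<Prod>i<n. [:1, a i:]) 1 = (\<Sum>i<n. a i)"
proof (induction n)
  case 0 then show ?case by simp
next
  case (Suc n)
  have e: "(\<Prod>i<Suc n. [:1, a i:]) = [:1, a n:] * (\<Prod>i<n. [:1, a i:])" by (simp add: mult.commute)
  show ?case unfolding e using Suc by (simp add: mult_pCons_left One_nat_def)
qed

lemma sum_s: "(\<Sum>i<n. if l i then -1 else 1 :: real) = real n - 2 * real (hamming_wt n l)"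
proof (induction n)
  case 0 then show ?case by (simp add: hamming_wt_def)
next
  case (Suc n)
  have "{i. i < Suc n \<and> l i} = (if l n then insert n {i. i < n \<and> l i} else {i. i < n \<and> l i})"
    by (auto simp: less_Suc_eq)
  then have "hamming_wt (Suc n) l = hamming_wt n l + (if l n then 1 else 0)"
    by (simp add: hamming_wt_def)
  then show ?case using Suc by simp
qed

lemma alg_final:
  fixes \<beta> :: real and s :: "nat \<Rightarrow> real"
  defines "x \<equiv> exp (- 2 * \<beta>)"
  shows "\<bar>exp (\<beta> * real n) / (exp \<beta> + exp (-\<beta>))^n - (2 * ((1 + (\<Prod>i<n. exp \<beta> + s i * exp (-\<beta>)) / (exp \<beta> + exp (-\<beta>))^n) / 2) - 1)\<bar>
    = \<bar>(\<Prod>i<n. 1 + s i * x) - 1\<bar> / (1 + x)^n"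
proof -
  define E where "E = exp \<beta>"
  have Ep: "E > 0" unfolding E_def by simp
  have xp: "x > 0" unfolding x_def by simp
  have em: "exp (-\<beta>) = E * x" unfolding E_def x_def by (simp add: exp_add[symmetric])
  have en: "exp (\<beta> * real n) = E ^ n" unfolding E_def by (rule exp_of_nat2_mult)
  have d: "(exp \<beta> + exp (-\<beta>))^n = E^n * (1 + x)^n"
    unfolding em E_def[symmetric] by (simp add: power_mult_distrib[symmetric] algebra_simps)
  have P: "(\<Prod>i<n. exp \<beta> + s i * exp (-\<beta>)) = E^n * (\<Prod>i<n. 1 + s i * x)"
  proof -
    have "(\<Prod>i<n. exp \<beta> + s i * exp (-\<beta>)) = (\<Prod>i<n. E * (1 + s i * x))"
      unfolding em E_def[symmetric] by (intro prod.cong refl) (simp add: algebra_simps)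
    also have "\<dots> = E^n * (\<Prod>i<n. 1 + s i * x)" by (simp add: prod.distrib)
    finally show ?thesis .
  qed
  have pos: "E^n > 0" "(1+x)^n > 0" using Ep xp by auto
  have "exp (\<beta> * real n) / (exp \<beta> + exp (-\<beta>))^n - (2 * ((1 + (\<Prod>i<n. exp \<beta> + s i * exp (-\<beta>)) / (exp \<beta> + exp (-\<beta>))^n) / 2) - 1)
      = (1 - (\<Prod>i<n. 1 + s i * x)) / (1 + x)^n"
  proof -
    have nz: "E \<noteq> 0" "1 + x \<noteq> 0" "E^n \<noteq> 0" "(1+x)^n \<noteq> 0" using Ep xp pos by auto
    show ?thesis unfolding en d P using nz by (simp add: field_simps)
  qed
  then show ?thesis using pos by (simp add: abs_minus_commute)
qed


theorem theorem2:
  fixes n :: nat and E :: "(nat \<times> nat) set" and l :: "nat \<Rightarrow> bool"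
  assumes "simple_graph n E"
  shows "\<exists>p :: real poly. coeff p 0 = 0 \<and> coeff p 1 = 0 \<and>
    (\<forall>(kB::real) (T::real) (M::'a measure) (out :: nat \<Rightarrow> 'a \<Rightarrow> real).
       kB > 0 \<longrightarrow> T > 0 \<longrightarrow> prob_space M \<longrightarrow>
       prob_space.indep_vars M (\<lambda>_. borel) out UNIV \<longrightarrow>
       (\<forall>i. AE \<omega> in M. out i \<omega> \<in> {1, -1}) \<longrightarrow>
       (\<forall>i. measure M {\<omega> \<in> space M. out i \<omega> = 1}
              = prob_plus n (stab_S n E l) (thermal_state n E (1 / (kB * T)))) \<longrightarrow>
       (AE \<omega> in M.
          (\<lambda>N. cmod (graph_fidelity n E (thermal_state n E (1 / (kB * T)))
                       - complex_of_real ((\<Sum>i<N. out i \<omega>) / real N)))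
          \<longlonglongrightarrow>
          \<bar>real_of_int (int n - 2 * int (hamming_wt n l)) * exp (- 2 * (1 / (kB * T)))
             + poly p (exp (- 2 * (1 / (kB * T))))\<bar>
          / (1 + exp (- 2 * (1 / (kB * T)))) ^ n))"
proof -
  note G = assms
  define w where "w = hamming_wt n l"
  define s where "s = (\<lambda>i. if l i then -1 else 1 :: real)"
  define q where "q = (\<Prod>i<n. [:1, s i:]) - 1 - [:0, real_of_int (int n - 2 * int w):]"
  have c0: "coeff q 0 = 0" using coeff_prod_lin[of s n] by (simp add: q_def)
  have c1: "coeff q 1 = 0" using coeff_prod_lin[of s n] sum_s[of l n] by (simp add: q_def s_def w_def)
  have pq: "poly q y = (\<Prod>i<n. 1 + s i * y) - 1 - real_of_int (int n - 2 * int w) * y" for y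
    by (simp add: q_def poly_prod algebra_simps)
  show ?thesis
  proof (rule exI[of _ q], intro conjI allI impI)
    show "coeff q 0 = 0" by (rule c0)
    show "coeff q 1 = 0" by (rule c1)
    fix kB T :: real and M :: "'a measure" and out :: "nat \<Rightarrow> 'a \<Rightarrow> real"
    assume kB: "kB > 0" and T: "T > 0" and PS: "prob_space M"
      and indep: "prob_space.indep_vars M (\<lambda>_. borel) out UNIV"
      and pm: "\<forall>i. AE \<omega> in M. out i \<omega> \<in> {1, -1}"
      and meas: "\<forall>i. measure M {\<omega> \<in> space M. out i \<omega> = 1} = prob_plus n (stab_S n E l) (thermal_state n E (1 / (kB * T)))"
    interpret P: prob_space M by (rule PS)
    define \<beta> where "\<beta> = 1 / (kB * T)"
    define pp where "pp = prob_plus n (stab_S n E l) (thermal_state n E \<beta>)"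
    define Fr where "Fr = exp (\<beta> * real n) / (exp \<beta> + exp (-\<beta>)) ^ n"
    have rv: "out i \<in> borel_measurable M" for i
      using indep unfolding P.indep_vars_def by auto
    have ex: "P.expectation (out i) = 2 * pp - 1" for i
      using P.expectation_pm1[OF rv pm[rule_format]] meas unfolding pp_def \<beta>_def by simp
    have L: "AE \<omega> in M. (\<lambda>N. (\<Sum>i<N. out i \<omega>) / real N) \<longlonglongrightarrow> 2 * pp - 1"
      by (rule P.slln_pm1[OF indep pm[rule_format] ex])
    have F: "graph_fidelity n E (thermal_state n E \<beta>) = complex_of_real Fr"
      unfolding Fr_def by (rule fid_val[OF G])
    have PP: "pp = (1 + (\<Prod>i<n. exp \<beta> + s i * exp (-\<beta>)) / (exp \<beta> + exp (-\<beta>)) ^ n) / 2"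
      unfolding pp_def pp_val[OF G] s_def by simp
    have EQ: "cmod (complex_of_real Fr - complex_of_real (2 * pp - 1))
       = \<bar>real_of_int (int n - 2 * int (hamming_wt n l)) * exp (- 2 * \<beta>) + poly q (exp (- 2 * \<beta>))\<bar>
          / (1 + exp (- 2 * \<beta>)) ^ n"
    proof -
      have "cmod (complex_of_real Fr - complex_of_real (2 * pp - 1)) = \<bar>Fr - (2 * pp - 1)\<bar>"
        by (simp only: of_real_diff[symmetric] norm_of_real)
      also have "\<dots> = \<bar>(\<Prod>i<n. 1 + s i * exp (- 2 * \<beta>)) - 1\<bar> / (1 + exp (- 2 * \<beta>))^n"
        unfolding Fr_def PP by (rule alg_final)
      also have "(\<Prod>i<n. 1 + s i * exp (- 2 * \<beta>)) - 1 = real_of_int (int n - 2 * int (hamming_wt n l)) * exp (- 2 * \<beta>) + poly q (exp (- 2 * \<beta>))"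
        unfolding pq w_def by simp
      finally show ?thesis .
    qed
    show "AE \<omega> in M. (\<lambda>N. cmod (graph_fidelity n E (thermal_state n E (1 / (kB * T)))
                       - complex_of_real ((\<Sum>i<N. out i \<omega>) / real N)))
          \<longlonglongrightarrow>
          \<bar>real_of_int (int n - 2 * int (hamming_wt n l)) * exp (- 2 * (1 / (kB * T)))
             + poly q (exp (- 2 * (1 / (kB * T))))\<bar>
          / (1 + exp (- 2 * (1 / (kB * T)))) ^ n"
      unfolding \<beta>_def[symmetric] F EQ[symmetric] using L
    proof eventually_elim
      case (elim \<omega>)
      show ?case by (intro tendsto_intros elim)
    qed
  qed
qed

end
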